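(* Let $L, N \in \mathbb{R}_{>0}$. Consider the super-twisting differentiator \begin{align*} \dot y_1 &= \lambda_1 \sqrt{L}\, \lfloor u - y_1 \rceil^{1/2} + y_2, & y_1(0) &= u(0),\\ \dot y_2 &= \lambda_2 L\, \lfloor u - y_1 \rceil^{0}, & y_2(0) &= 0,\\ y &= y_2, \end{align*} with parameters $\lambda_1, \lambda_2 \in \mathbb{R}_{>0}$. Then for every $\tau \in \mathbb{R}_{\ge 0}$ there exist $f \in \mathcal{F}_L$ and $\eta \in \mathcal{E}_N$ with $f(0) = \dot f(0) = 0$ such that some (Filippov) trajectory of the differentiator with input $u = f + \eta$ satisfies $$\sup_{t \ge \tau} |y(t) - \dot f(t)| \ge 2\sqrt{\lambda_2+1}\,\sqrt{NL}.$$
   Context: For $z,p \in \mathbb{R}$, $\lfloor z \rceil^{p} = |z|^p \operatorname{sign}(z)$; in particular $\lfloor z \rceil^0 = \operatorname{sign}(z)$. Solutions of the differentiator (which has a discontinuous right-hand side) are understood in the sense of Filippov. $\mathcal{F}_L$ is the set of differentiable functions $f:\mathbb{R}_{\ge 0}\to\mathbb{R}$ with Lipschitz continuous first derivative such that $|\ddot f(t)| \le L$ for almost every $t \ge 0$. $\mathcal{E}_N$ is the set of Lebesgue measurable functions $\eta:\mathbb{R}_{\ge 0}\to\mathbb{R}$ with $|\eta(t)| \le N$ for all $t \ge 0$. *)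

theory Defs
  imports "HOL-Analysis.Analysis"
begin

definition sgnpow :: "real \<Rightarrow> real \<Rightarrow> real" where
  "sgnpow z p = \<bar>z\<bar> powr p * sgn z"

definition in_FL :: "real \<Rightarrow> (real \<Rightarrow> real) \<Rightarrow> (real \<Rightarrow> real) \<Rightarrow> bool" where
  "in_FL L f f' \<longleftrightarrow>
     (\<forall>t\<ge>0. (f has_real_derivative f' t) (at t within {0..})) \<and>
     (\<exists>K. K-lipschitz_on {0..} f') \<and>
     (AE t in lebesgue. t \<ge> 0 \<longrightarrow>
        (\<exists>f''. (f' has_real_derivative f'') (at t within {0..}) \<and> \<bar>f''\<bar> \<le> L))"

definition in_EN :: "real \<Rightarrow> (real \<Rightarrow> real) \<Rightarrow> bool" where
  "in_EN N \<eta> \<longleftrightarrow> \<eta> \<in> borel_measurable (lebesgue_on {0..}) \<and> (\<forall>t\<ge>0. \<bar>\<eta> t\<bar> \<le> N)"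

definition filippov_set :: "('a::euclidean_space \<Rightarrow> 'a) \<Rightarrow> 'a \<Rightarrow> 'a set" where
  "filippov_set g x =
     (\<Inter>\<delta>\<in>{0<..}. \<Inter>M\<in>null_sets lebesgue. closure (convex hull (g ` (ball x \<delta> - M))))"

text \<open>Filippov solution on [0,inf) of x' = g t x: y is absolutely continuous
  on every [0,T] (written as integral of an absolutely integrable v) and
  v t \<in> Filippov set at y t for almost every t \<ge> 0.\<close>
definition filippov_solution ::
  "(real \<Rightarrow> 'a::euclidean_space \<Rightarrow> 'a) \<Rightarrow> (real \<Rightarrow> 'a) \<Rightarrow> bool" where
  "filippov_solution g y \<longleftrightarrow>
     (\<exists>v. (\<forall>T\<ge>0. v absolutely_integrable_on {0..T} \<and> (v has_integral (y T - y 0)) {0..T}) \<and>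
          (AE t in lebesgue. t \<ge> 0 \<longrightarrow> v t \<in> filippov_set (g t) (y t)))"

definition std_rhs :: "real \<Rightarrow> real \<Rightarrow> real \<Rightarrow> (real \<Rightarrow> real) \<Rightarrow> real \<Rightarrow> real \<times> real \<Rightarrow> real \<times> real" where
  "std_rhs l1 l2 L u t z =
     (l1 * sqrt L * sgnpow (u t - fst z) (1/2) + snd z,
      l2 * L * sgnpow (u t - fst z) 0)"

end

theory Submission
  imports Defs
begin


lemma filippov_lim:
  fixes g h :: "real \<times> real \<Rightarrow> real \<times> real"
  assumes hc: "isCont h x" and Ho: "open H" and xH: "x \<in> closure H" and gh: "\<forall>z\<in>H. g z = h z"
  shows "h x \<in> filippov_set g x"
  unfolding filippov_set_def
proof (intro INT_I)
  fix \<delta> :: real and M :: "(real \<times> real) set" assume d: "\<delta> \<in> {0<..}" and M: "M \<in> null_sets lebesgue"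
  have "h x \<in> closure (g ` (ball x \<delta> - M))"
    unfolding closure_approachable
  proof (intro allI impI)
    fix e :: real assume e: "e > 0"
    obtain r where r: "r > 0" "\<forall>z. dist z x < r \<longrightarrow> dist (h z) (h x) < e"
      using hc e unfolding continuous_at_eps_delta by blast
    define U where "U = ball x (min r \<delta>) \<inter> H"
    have Uo: "open U" unfolding U_def using Ho by auto
    have "\<exists>z\<in>H. dist z x < min r \<delta>" proof -
      have "min r \<delta> > 0" using r d by auto
      thus ?thesis using xH unfolding closure_approachable by blast
    qed
    hence Une: "U \<noteq> {}" unfolding U_def by (auto simp: dist_commute)
    have "\<not> negligible U" using open_not_negligible[OF Uo Une] .
    moreover have "negligible M" using M negligible_iff_null_sets by blast
    ultimately have "\<not> U \<subseteq> M" using negligible_subset by blast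
    then obtain z where z: "z \<in> U" "z \<notin> M" by blast
    have "g z = h z" using z gh unfolding U_def by auto
    moreover have "dist z x < r" using z unfolding U_def by (auto simp: dist_commute)
    ultimately have "dist (g z) (h x) < e" using r(2)[rule_format, of z] by simp
    moreover have "g z \<in> g ` (ball x \<delta> - M)" using z unfolding U_def by auto
    ultimately show "\<exists>y\<in>g ` (ball x \<delta> - M). dist y (h x) < e" by blast
  qed
  also have "\<dots> \<subseteq> closure (convex hull (g ` (ball x \<delta> - M)))"
    by (intro closure_mono hull_subset)
  finally show "h x \<in> closure (convex hull (g ` (ball x \<delta> - M)))" .
qed

lemma convex_filippov_set: "convex (filippov_set g x)"
  unfolding filippov_set_def
  by (intro convex_INT ballI convex_closure convex_convex_hull)

lemma sgnpow_pos: "z > 0 \<Longrightarrow> sgnpow z (1/2) = sqrt z" "z > 0 \<Longrightarrow> sgnpow z 0 = 1"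
  by (auto simp: sgnpow_def powr_half_sqrt)

lemma sgnpow_neg: "z < 0 \<Longrightarrow> sgnpow z (1/2) = - sqrt (-z)" "z < 0 \<Longrightarrow> sgnpow z 0 = -1"
  by (auto simp: sgnpow_def powr_half_sqrt)

lemma filippov_plus:
  fixes uu xb a b :: real
  defines "g \<equiv> (\<lambda>z::real\<times>real. (a * sgnpow (uu - fst z) (1/2) + snd z, b * sgnpow (uu - fst z) 0))"
  shows "(xb, b) \<in> filippov_set g (uu, xb)"
proof -
  define h where "h = (\<lambda>z::real\<times>real. (a * sqrt (uu - fst z) + snd z, b))"
  have "h (uu, xb) \<in> filippov_set g (uu, xb)"
  proof (rule filippov_lim[where H = "{z. fst z < uu}"])
    show "isCont h (uu, xb)" unfolding h_def by (intro continuous_intros)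
    show "open {z::real\<times>real. fst z < uu}" by (intro open_Collect_less continuous_intros)
    show "(uu, xb) \<in> closure {z::real\<times>real. fst z < uu}"
      unfolding closure_approachable
    proof (intro allI impI)
      fix e :: real assume "e > 0"
      thus "\<exists>y\<in>{z. fst z < uu}. dist y (uu, xb) < e"
        by (intro bexI[of _ "(uu - e/2, xb)"]) (auto simp: dist_Pair_Pair dist_real_def)
    qed
    show "\<forall>z\<in>{z. fst z < uu}. g z = h z" unfolding g_def h_def by (auto simp: sgnpow_pos)
  qed
  thus ?thesis unfolding h_def by simp
qed

lemma filippov_minus:
  fixes uu xa xb a b :: real
  defines "g \<equiv> (\<lambda>z::real\<times>real. (a * sgnpow (uu - fst z) (1/2) + snd z, b * sgnpow (uu - fst z) 0))"
  assumes "xa \<ge> uu"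
  shows "(xb - a * sqrt (xa - uu), - b) \<in> filippov_set g (xa, xb)"
proof -
  define h where "h = (\<lambda>z::real\<times>real. (snd z - a * sqrt (fst z - uu), - b))"
  have "h (xa, xb) \<in> filippov_set g (xa, xb)"
  proof (rule filippov_lim[where H = "{z. uu < fst z}"])
    show "isCont h (xa, xb)" unfolding h_def by (intro continuous_intros)
    show "open {z::real\<times>real. uu < fst z}" by (intro open_Collect_less continuous_intros)
    show "(xa, xb) \<in> closure {z::real\<times>real. uu < fst z}"
      unfolding closure_approachable
    proof (intro allI impI)
      fix e :: real assume "e > 0"
      thus "\<exists>y\<in>{z. uu < fst z}. dist y (xa, xb) < e" using assms(2)
        by (intro bexI[of _ "(xa + e/2, xb)"]) (auto simp: dist_Pair_Pair dist_real_def)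
    qed
    show "\<forall>z\<in>{z. uu < fst z}. g z = h z" unfolding g_def h_def by (auto simp: sgnpow_neg)
  qed
  thus ?thesis unfolding h_def by simp
qed

lemma filippov_slide:
  fixes uu xb a b s :: real
  defines "g \<equiv> (\<lambda>z::real\<times>real. (a * sgnpow (uu - fst z) (1/2) + snd z, b * sgnpow (uu - fst z) 0))"
  assumes "-1 \<le> s" "s \<le> 1"
  shows "(xb, b * s) \<in> filippov_set g (uu, xb)"
proof -
  have p: "(xb, b) \<in> filippov_set g (uu, xb)" unfolding g_def by (rule filippov_plus)
  have m: "(xb, - b) \<in> filippov_set g (uu, xb)"
    using filippov_minus[of uu uu xb a b] unfolding g_def by simp
  have "((1+s)/2) *\<^sub>R (xb, b) + ((1-s)/2) *\<^sub>R (xb, - b) \<in> filippov_set g (uu, xb)"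
    by (rule convexD[OF convex_filippov_set p m]) (use assms in \<open>auto simp: field_simps\<close>)
  moreover have "((1+s)/2) *\<^sub>R (xb, b) + ((1-s)/2) *\<^sub>R (xb, - b) = (xb, b * s)"
    by (simp add: field_simps)
  ultimately show ?thesis by simp
qed



definition goodpar :: "real \<Rightarrow> real \<Rightarrow> real \<Rightarrow> real \<Rightarrow> real \<Rightarrow> real \<Rightarrow> real \<Rightarrow> bool" where
  "goodpar A B N k q0 xe d3 \<longleftrightarrow> q0 > 0 \<and> xe > 0 \<and> d3 \<ge> 0 \<and> xe \<le> B/A + d3 \<and>
    (\<forall>\<sigma>. 0 \<le> \<sigma> \<and> \<sigma> \<le> xe \<longrightarrow> \<bar>N + (B - k*q0)*\<sigma> - A*\<sigma>^2/2 - q0^2\<bar> \<le> N) \<and>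
    (\<forall>\<sigma>. xe \<le> \<sigma> \<and> \<sigma> \<le> B/A + d3 \<longrightarrow> \<bar>N + B*\<sigma> - A*\<sigma>^2/2 - k*q0*xe\<bar> \<le> N) \<and>
    (\<forall>\<rho>. 0 \<le> \<rho> \<and> \<rho> \<le> d3 \<longrightarrow>
       \<bar>N + B*(B/A + d3) - A*(B/A + d3)^2/2 - k*q0*xe + (B - A*(B/A + d3))*\<rho> + A*\<rho>^2/2\<bar> \<le> N)"

lemma par_R:
  fixes A B N k :: real
  assumes A: "A > 0" and N: "N > 0" and k: "k > 0" and B: "B > 0" and BB: "B^2 = 4*A*N"
    and kA: "k^2 \<le> 2*A"
  shows "\<exists>q0 xe d3. goodpar A B N k q0 xe d3"
proof -
  define q0 where "q0 = min (sqrt (2*N)) (B/(2*k))"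
  define c where "c = k*q0"
  define xe where "xe = 2*(B-c)/A"
  define d3 where "d3 = (B - 2*c)/A"
  have q0p: "q0 > 0" unfolding q0_def using N k B by auto
  have Q2N: "q0^2 \<le> 2*N" unfolding q0_def using N
    by (metis min.cobounded1 real_sqrt_pow2 less_eq_real_def power_mono q0_def q0p zero_le_mult_iff zero_less_numeral)
  have cB: "c \<le> B/2" unfolding c_def q0_def using k by (auto simp: min_def field_simps)
  have c0: "c > 0" unfolding c_def using k q0p by auto
  have d30: "d3 \<ge> 0" unfolding d3_def using cB A by auto
  have xep: "xe > 0" unfolding xe_def using cB A B by auto
  have xed: "xe = B/A + d3" unfolding xe_def d3_def using A by (simp add: field_simps)
  have up: "(B - c)^2 \<le> 2*A*q0^2"
  proof (cases "sqrt (2*N) \<le> B/(2*k)")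
    case True
    hence "q0 = sqrt (2*N)" unfolding q0_def by auto
    hence "2*A*q0^2 = B^2" using N BB by simp
    moreover have "(B - c)^2 \<le> B^2" using cB c0 B by (intro power_mono) auto
    ultimately show ?thesis by simp
  next
    case False
    hence q: "q0 = B/(2*k)" unfolding q0_def by auto
    hence "c = B/2" unfolding c_def using k by simp
    hence "B - c = B/2" by simp
    hence e1: "(B-c)^2 = B^2/4" by (simp add: power_divide)
    have "q0^2 = B^2/(4*k^2)" unfolding q by (simp add: power_divide power_mult_distrib)
    hence e2: "2*A*q0^2 = A*B^2/(2*k^2)" by simp
    have "B^2/4 \<le> A*B^2/(2*k^2)" using kA k B by (simp add: field_simps)
    thus ?thesis unfolding e1 e2 .
  qed
  have H1: "\<bar>N + (B - k*q0)*\<sigma> - A*\<sigma>^2/2 - q0^2\<bar> \<le> N" if s: "0 \<le> \<sigma>" "\<sigma> \<le> xe" for \<sigma>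
  proof -
    have "A*\<sigma> \<le> 2*(B-c)" using s(2) A unfolding xe_def by (simp add: field_simps)
    hence "(B-c) - A*\<sigma>/2 \<ge> 0" by simp
    hence "\<sigma>*((B-c) - A*\<sigma>/2) \<ge> 0" using s(1) by simp
    moreover have "(B - c)*\<sigma> - A*\<sigma>^2/2 = \<sigma>*((B-c) - A*\<sigma>/2)" by (simp add: power2_eq_square algebra_simps)
    ultimately have F0: "(B - c)*\<sigma> - A*\<sigma>^2/2 \<ge> 0" by simp
    have "(B - c)*\<sigma> - A*\<sigma>^2/2 \<le> (B-c)^2/(2*A)"
    proof -
      have "0 \<le> (A*\<sigma> - (B - c))^2/(2*A)" using A by simp
      also have "\<dots> = (B-c)^2/(2*A) - ((B - c)*\<sigma> - A*\<sigma>^2/2)" using A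
        by (simp add: power2_eq_square field_simps)
      finally show ?thesis by simp
    qed
    also have "\<dots> \<le> q0^2" using up A by (simp add: field_simps)
    finally show ?thesis using F0 Q2N unfolding c_def by (simp add: abs_le_iff)
  qed
  have H2: "\<bar>N + B*\<sigma> - A*\<sigma>^2/2 - k*q0*xe\<bar> \<le> N" if s: "xe \<le> \<sigma>" "\<sigma> \<le> B/A + d3" for \<sigma>
  proof -
    have "\<sigma> = xe" using s xed by simp
    moreover have "B*xe - A*xe^2/2 - c*xe = 0" unfolding xe_def using A
      by (simp add: power2_eq_square field_simps)
    ultimately show ?thesis unfolding c_def using N by (simp add: algebra_simps)
  qed
  have H3: "\<bar>N + B*(B/A + d3) - A*(B/A + d3)^2/2 - k*q0*xe + (B - A*(B/A + d3))*\<rho> + A*\<rho>^2/2\<bar> \<le> N"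
    if r: "0 \<le> \<rho>" "\<rho> \<le> d3" for \<rho>
  proof -
    define D0 where "D0 = B - 2*c"
    have e: "N + B*(B/A + d3) - A*(B/A + d3)^2/2 - k*q0*xe + (B - A*(B/A + d3))*\<rho> + A*\<rho>^2/2
       = N - D0*\<rho> + A*\<rho>^2/2"
      unfolding D0_def d3_def xe_def c_def[symmetric] using A
      by (simp add: power2_eq_square field_simps)
    have Ar: "A*\<rho> \<le> D0" using r(2) A unfolding d3_def D0_def by (simp add: field_simps)
    have "A*\<rho>^2/2 \<le> D0*\<rho>"
    proof -
      have "A*\<rho>*\<rho> \<le> D0*\<rho>" using Ar r(1) by (rule mult_right_mono)
      moreover have "0 \<le> D0" using Ar A r(1) by (smt (verit) mult_nonneg_nonneg)
      hence "0 \<le> D0*\<rho>" using r(1) by simp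
      ultimately show ?thesis by (simp add: power2_eq_square mult.assoc)
    qed
    moreover have "D0*\<rho> - A*\<rho>^2/2 \<le> 2*N"
    proof -
      have "D0*\<rho> - A*\<rho>^2/2 \<le> D0^2/(2*A)"
      proof -
        have "0 \<le> (A*\<rho> - D0)^2/(2*A)" using A by simp
        also have "\<dots> = D0^2/(2*A) - (D0*\<rho> - A*\<rho>^2/2)" using A
          by (simp add: power2_eq_square field_simps)
        finally show ?thesis by simp
      qed
      also have "\<dots> \<le> B^2/(2*A)"
        using A cB c0 B unfolding D0_def by (intro divide_right_mono power_mono) auto
      also have "\<dots> = 2*N" using BB A by (simp add: field_simps)
      finally show ?thesis .
    qed
    ultimately show ?thesis unfolding e by (simp add: abs_le_iff)
  qed
  show ?thesis unfolding goodpar_def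
    apply (rule exI[of _ q0], rule exI[of _ xe], rule exI[of _ d3])
    using q0p xep d30 xed H1 H2 H3 by auto
qed

lemma par_S:
  fixes A B N k :: real
  assumes A: "A > 0" and N: "N > 0" and k: "k > 0" and B: "B > 0" and BB: "B^2 = 4*A*N"
    and kA: "2*A \<le> k^2"
  shows "\<exists>q0 xe d3. goodpar A B N k q0 xe d3"
proof -
  define g where "g = k^2/(k^2 + 2*A)"
  have "k^2 > 0" using k by simp
  hence kp: "k^2 + 2*A > 0" using A by linarith
  have g1: "g \<le> 1" unfolding g_def using A kp by (simp add: field_simps)
  have g2: "1/2 \<le> g" unfolding g_def using kA kp by (simp add: field_simps)
  have gk: "2*A*g = (1-g)*k^2" unfolding g_def using kp by (simp add: field_simps)
  define c where "c = g*B"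
  define q0 where "q0 = c/k"
  define xe where "xe = 2*N/c"
  have c0: "c > 0" unfolding c_def using g2 B by simp
  have q0p: "q0 > 0" unfolding q0_def using c0 k by simp
  have xep: "xe > 0" unfolding xe_def using c0 N by simp
  have kq: "k*q0 = c" unfolding q0_def using k by simp
  have qq: "q0^2 = 2*g*(1-g)*N"
  proof -
    have "q0^2 * k^2 = c^2" using kq by (metis power_mult_distrib mult.commute)
    also have "\<dots> = g^2 * (4*A*N)" unfolding c_def BB[symmetric] by (simp add: power_mult_distrib)
    also have "\<dots> = 2*g*N*(2*A*g)" by (simp add: power2_eq_square)
    also have "\<dots> = (2*g*(1-g)*N) * k^2" unfolding gk by simp
    finally show ?thesis using k by simp
  qed
  have gg: "g*(1-g) \<le> 1/4"
  proof -
    have "0 \<le> (g - 1/2)^2" by simp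
    thus ?thesis by (simp add: power2_eq_square algebra_simps)
  qed
  have Q2N: "q0^2 \<le> 2*N"
  proof -
    have "(g*(1-g))*(2*N) \<le> 1*(2*N)" using gg N by (intro mult_right_mono) auto
    thus ?thesis unfolding qq by (simp add: algebra_simps)
  qed
  have xeB: "xe \<le> B/A"
  proof -
    have cB: "c*B = g*(4*A*N)" unfolding c_def BB[symmetric] by (simp add: power2_eq_square)
    have "(1/2)*(4*A*N) \<le> g*(4*A*N)" using g2 A N by (intro mult_right_mono) auto
    hence "2*N*A \<le> c*B" unfolding cB by simp
    thus ?thesis unfolding xe_def using c0 A by (simp add: field_simps)
  qed
  have cxe: "c*xe = 2*N" unfolding xe_def using c0 by simp
  have Fxe: "B*xe - A*xe^2/2 \<ge> q0^2"
  proof -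
    have x1: "B*xe = 2*N/g" unfolding xe_def c_def using B g2 by (simp add: field_simps)
    have x2: "A*xe^2/2 = N/(2*g^2)"
    proof -
      have "A*xe^2/2 = A*(4*N^2)/(2*g^2*B^2)" unfolding xe_def c_def by (simp add: power_divide power_mult_distrib)
      also have "\<dots> = N/(2*g^2)" unfolding BB using A N by (simp add: power2_eq_square field_simps)
      finally show ?thesis .
    qed
    have "4*g^3*(1-g) \<le> 4*g - 1"
    proof -
      have "4*g^3*(1-g) = 4*(g*(1-g))*g^2" by (simp add: power2_eq_square power3_eq_cube algebra_simps)
      also have "\<dots> \<le> 1*g^2" using gg by (intro mult_right_mono) auto
      also have "\<dots> \<le> 1" using g1 g2 by (simp add: power_le_one)
      also have "\<dots> \<le> 4*g - 1" using g2 by simp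
      finally show ?thesis .
    qed
    hence nn: "0 \<le> N*((4*g - 1) - 4*g^3*(1-g))/(2*g^2)" using N by simp
    have "2*N/g - N/(2*g^2) - 2*g*(1-g)*N = N*((4*g - 1) - 4*g^3*(1-g))/(2*g^2)"
      using g2 by (simp add: field_simps power2_eq_square power3_eq_cube)
    hence "2*g*(1-g)*N \<le> 2*N/g - N/(2*g^2)" using nn by linarith
    thus ?thesis unfolding x1 x2 qq by simp
  qed
  have up: "(B - c)^2 \<le> 2*A*q0^2"
  proof -
    have "(B - c)^2 = (1-g)^2 * (4*A*N)" unfolding c_def BB[symmetric] by (simp add: power2_eq_square algebra_simps)
    also have "\<dots> = 4*A*N*(1-g)*(1-g)" by (simp add: power2_eq_square)
    also have "\<dots> \<le> 4*A*N*(1-g)*g" using g2 g1 A N by (intro mult_left_mono) auto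
    also have "\<dots> = 2*A*q0^2" unfolding qq by simp
    finally show ?thesis .
  qed
  have H1: "\<bar>N + (B - k*q0)*\<sigma> - A*\<sigma>^2/2 - q0^2\<bar> \<le> N" if s: "0 \<le> \<sigma>" "\<sigma> \<le> xe" for \<sigma>
  proof -
    have "(B - c)*\<sigma> - A*\<sigma>^2/2 \<le> (B-c)^2/(2*A)"
    proof -
      have "0 \<le> (A*\<sigma> - (B - c))^2/(2*A)" using A by simp
      also have "\<dots> = (B-c)^2/(2*A) - ((B - c)*\<sigma> - A*\<sigma>^2/2)" using A
        by (simp add: power2_eq_square field_simps)
      finally show ?thesis by simp
    qed
    also have "\<dots> \<le> q0^2" using up A by (simp add: field_simps)
    finally have U: "(B - c)*\<sigma> - A*\<sigma>^2/2 \<le> q0^2" .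
    have conc: "(B - c)*\<sigma> - A*\<sigma>^2/2 - (\<sigma>/xe)*((B - c)*xe - A*xe^2/2) = A*\<sigma>*(xe - \<sigma>)/2"
      using xep by (simp add: power2_eq_square field_simps)
    have "A*\<sigma>*(xe - \<sigma>)/2 \<ge> 0" using A s by simp
    hence L1: "(B - c)*\<sigma> - A*\<sigma>^2/2 \<ge> (\<sigma>/xe)*((B - c)*xe - A*xe^2/2)" using conc by simp
    have "(B - c)*xe - A*xe^2/2 \<ge> q0^2 - 2*N" using Fxe cxe by (simp add: algebra_simps)
    have "(B - c)*\<sigma> - A*\<sigma>^2/2 \<ge> q0^2 - 2*N"
    proof (cases "(B - c)*xe - A*xe^2/2 \<ge> 0")
      case True
      hence "(\<sigma>/xe)*((B - c)*xe - A*xe^2/2) \<ge> 0" using s xep by simp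
      thus ?thesis using L1 Q2N by linarith
    next
      case False
      have "\<sigma>/xe \<le> 1" using s xep by simp
      hence "(\<sigma>/xe)*((B - c)*xe - A*xe^2/2) \<ge> 1*((B - c)*xe - A*xe^2/2)"
        using False by (intro mult_right_mono_neg) auto
      hence "(\<sigma>/xe)*((B - c)*xe - A*xe^2/2) \<ge> ((B - c)*xe - A*xe^2/2)" by simp
      thus ?thesis using L1 \<open>(B - c)*xe - A*xe^2/2 \<ge> q0^2 - 2*N\<close> by linarith
    qed
    thus ?thesis using U unfolding kq by (simp add: abs_le_iff)
  qed
  have H2: "\<bar>N + B*\<sigma> - A*\<sigma>^2/2 - k*q0*xe\<bar> \<le> N" if s: "xe \<le> \<sigma>" "\<sigma> \<le> B/A + 0" for \<sigma>
  proof -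
    have s0: "0 \<le> \<sigma>" using s xep by simp
    have "A*\<sigma> \<le> B" using s A by (simp add: field_simps)
    hence "B - A*\<sigma>/2 \<ge> 0" using s0 A B by simp
    hence "\<sigma>*(B - A*\<sigma>/2) \<ge> 0" using s0 by simp
    hence l: "B*\<sigma> - A*\<sigma>^2/2 \<ge> 0" by (simp add: power2_eq_square algebra_simps)
    have "0 \<le> (A*\<sigma> - B)^2/(2*A)" using A by simp
    also have "\<dots> = B^2/(2*A) - (B*\<sigma> - A*\<sigma>^2/2)" using A
      by (simp add: power2_eq_square field_simps)
    also have "B^2/(2*A) = 2*N" unfolding BB using A by simp
    finally have u: "B*\<sigma> - A*\<sigma>^2/2 \<le> 2*N" by simp
    show ?thesis using l u cxe unfolding kq by (simp add: abs_le_iff)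
  qed
  have H3: "\<bar>N + B*(B/A + 0) - A*(B/A + 0)^2/2 - k*q0*xe + (B - A*(B/A + 0))*\<rho> + A*\<rho>^2/2\<bar> \<le> N"
    if "0 \<le> \<rho>" "\<rho> \<le> 0" for \<rho>
  proof -
    have r: "\<rho> = 0" using that by simp
    have "B*(B/A) - A*(B/A)^2/2 = B^2/(2*A)" using A by (simp add: power2_eq_square field_simps)
    also have "\<dots> = 2*N" unfolding BB using A by simp
    finally show ?thesis unfolding r kq cxe using N by simp
  qed
  show ?thesis unfolding goodpar_def
    apply (rule exI[of _ q0], rule exI[of _ xe], rule exI[of _ 0])
    using q0p xep xeB H1 H2 H3 by auto
qed

lemma par_exists:
  fixes A B N k :: real
  assumes "A > 0" "N > 0" "k > 0" "B > 0" "B^2 = 4*A*N"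
  shows "\<exists>q0 xe d3. goodpar A B N k q0 xe d3"
  using par_R[OF assms] par_S[OF assms] by (metis linorder_le_cases)



definition rp :: "real \<Rightarrow> real" where "rp x = max x 0"
definition rq :: "real \<Rightarrow> real" where "rq x = (max x 0)^2/2"
definition hv :: "real \<Rightarrow> real" where "hv x = (if 0 < x then 1 else 0)"

lemma cont_rp[continuous_intros]: "continuous_on S f \<Longrightarrow> continuous_on S (\<lambda>x. rp (f x))"
  unfolding rp_def by (intro continuous_intros)
lemma cont_rq[continuous_intros]: "continuous_on S f \<Longrightarrow> continuous_on S (\<lambda>x. rq (f x))"
  unfolding rq_def by (intro continuous_intros) auto

lemma meas_rp[measurable]: "rp \<in> borel_measurable borel"
  unfolding rp_def by measurable
lemma meas_rq[measurable]: "rq \<in> borel_measurable borel"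
  unfolding rq_def by measurable
lemma meas_hv[measurable]: "hv \<in> borel_measurable borel"
  unfolding hv_def by measurable

lemma lift_meas: "f \<in> borel_measurable borel \<Longrightarrow> f \<in> borel_measurable (lebesgue_on S)"
  using measurable_compose[OF id_borel_measurable_lebesgue_on[of S]] by simp

lemma deriv_rp: "x \<noteq> a \<Longrightarrow> ((\<lambda>t. rp (t - a)) has_real_derivative hv (x - a)) (at x)"
proof -
  assume xa: "x \<noteq> a"
  show ?thesis
  proof (cases "x < a")
    case True
    have "((\<lambda>t. 0) has_real_derivative hv (x - a)) (at x)" using True by (simp add: hv_def)
    thus ?thesis
      by (rule has_field_derivative_transform_within_open[where S="{..<a}"])
         (use True in \<open>auto simp: rp_def hv_def\<close>)
  next
    case False
    hence xa': "a < x" using xa by simp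
    have "((\<lambda>t. t - a) has_real_derivative hv (x - a)) (at x)" using xa' by (auto intro!: derivative_eq_intros simp: hv_def)
    thus ?thesis
      by (rule has_field_derivative_transform_within_open[where S="{a<..}"])
         (use xa' in \<open>auto simp: rp_def hv_def\<close>)
  qed
qed

lemma deriv_rq: "((\<lambda>t. rq (t - a)) has_real_derivative rp (x - a)) (at x)"
proof (cases "x = a")
  case False
  show ?thesis
  proof (cases "x < a")
    case True
    have "((\<lambda>t. 0) has_real_derivative rp (x - a)) (at x)" using True by (simp add: rp_def)
    thus ?thesis
      by (rule has_field_derivative_transform_within_open[where S="{..<a}"])
         (use True in \<open>auto simp: rp_def rq_def\<close>)
  next
    case False
    hence xa': "a < x" using \<open>x \<noteq> a\<close> by simp
    have "((\<lambda>t. (t - a)^2/2) has_real_derivative rp (x - a)) (at x)" using xa' by (auto intro!: derivative_eq_intros simp: rp_def)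
    thus ?thesis
      by (rule has_field_derivative_transform_within_open[where S="{a<..}"])
         (use xa' in \<open>auto simp: rp_def rq_def\<close>)
  qed
next
  case True
  have "((\<lambda>t. (rq (t - a) - rq (x - a)) / (t - x)) \<longlongrightarrow> 0) (at x)"
  proof (rule Lim_null_comparison)
    show "\<forall>\<^sub>F t in at x. norm ((rq (t - a) - rq (x - a)) / (t - x)) \<le> \<bar>t - x\<bar>"
    proof (rule always_eventually, intro allI)
      fix t
      have "norm ((rq (t - a) - rq (x - a)) / (t - x)) = (max (t - x) 0)^2/2 / \<bar>t - x\<bar>"
        using True by (simp add: rq_def abs_divide) (simp add: abs_if)
      also have "\<dots> \<le> \<bar>t - x\<bar>"
      proof (cases "t = x")
        case False
        have "(max (t - x) 0)^2 \<le> \<bar>t - x\<bar>^2" by (intro power_mono) auto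
        moreover have "\<bar>t - x\<bar>^2 = \<bar>t - x\<bar> * \<bar>t - x\<bar>" by (simp add: power2_eq_square)
        moreover have "0 \<le> \<bar>t - x\<bar> * \<bar>t - x\<bar>" by simp
        ultimately have "(max (t - x) 0)^2/2 \<le> \<bar>t - x\<bar> * \<bar>t - x\<bar>" by linarith
        thus ?thesis using False by (simp add: divide_le_eq)
      qed simp
      finally show "norm ((rq (t - a) - rq (x - a)) / (t - x)) \<le> \<bar>t - x\<bar>" .
    qed
    show "((\<lambda>t. \<bar>t - x\<bar>) \<longlongrightarrow> 0) (at x)"
      by (intro tendsto_rabs_zero LIM_zero tendsto_ident_at)
  qed
  thus ?thesis using True unfolding has_field_derivative_iff by (simp add: rp_def)
qed

lemma rp_lip: "\<bar>rp x - rp y\<bar> \<le> \<bar>x - y\<bar>"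
  unfolding rp_def by auto

lemma rp_bound: "\<bar>rp (x - a)\<bar> \<le> \<bar>x\<bar> + \<bar>a\<bar>"
  unfolding rp_def by auto



lemma band:
  fixes A B N h1 k q0 xe d3 c \<tau> t1 te t2 t3 t :: real
  assumes A: "A > 0" and N: "N > 0" and h1: "h1 > 0" and B: "B = A*h1" and N4: "4*N = A*h1^2"
    and gp: "goodpar A B N k q0 xe d3" and c: "c = k*q0"
    and t1: "t1 = \<tau> + h1" and te: "te = t1 + xe" and t2: "t2 = t1 + (h1 + d3)" and t3: "t3 = t2 + d3"
  shows "\<bar>-N + A*(rq(t-\<tau>) - 2*rq(t-t1) + 2*rq(t-t2) - rq(t-t3)) - c*(rp(t-t1) - rp(t-te))
           - q0^2*(hv(t-t1) - hv(t-te))\<bar> \<le> N"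
proof -
  have BA: "B/A = h1" using A B by simp
  have Ne: "N = A*h1^2/4" using N4 by simp
  note gp = gp[unfolded goodpar_def BA]
  have q0: "q0 > 0" and xe: "xe > 0" and d3: "d3 \<ge> 0" and xd: "xe \<le> h1 + d3" using gp by auto
  have H1: "\<And>\<sigma>. 0 \<le> \<sigma> \<Longrightarrow> \<sigma> \<le> xe \<Longrightarrow> \<bar>N + (B - k*q0)*\<sigma> - A*\<sigma>^2/2 - q0^2\<bar> \<le> N" using gp by blast
  have H2: "\<And>\<sigma>. xe \<le> \<sigma> \<Longrightarrow> \<sigma> \<le> h1 + d3 \<Longrightarrow> \<bar>N + B*\<sigma> - A*\<sigma>^2/2 - k*q0*xe\<bar> \<le> N" using gp by blast
  have H3: "\<And>\<rho>. 0 \<le> \<rho> \<Longrightarrow> \<rho> \<le> d3 \<Longrightarrow>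
       \<bar>N + B*(h1 + d3) - A*(h1 + d3)^2/2 - k*q0*xe + (B - A*(h1 + d3))*\<rho> + A*\<rho>^2/2\<bar> \<le> N"
    using gp by blast
  define F where "F t = -N + A*(rq(t-\<tau>) - 2*rq(t-t1) + 2*rq(t-t2) - rq(t-t3)) - c*(rp(t-t1) - rp(t-te))
           - q0^2*(hv(t-t1) - hv(t-te))" for t
  have o1: "\<tau> < t1" "t1 < te" "te \<le> t2" "t2 \<le> t3" using t1 te t2 t3 h1 xe d3 xd by auto
  have "\<bar>F t\<bar> \<le> N"
  proof (cases "t \<le> \<tau>")
    case True
    thus ?thesis using o1 N unfolding F_def rq_def rp_def hv_def by auto
  next
    case n0: False
    show ?thesis
    proof (cases "t \<le> t1")
      case True
      have "F t = -N + A*(t-\<tau>)^2/2" using n0 True o1 unfolding F_def rq_def rp_def hv_def by auto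
      moreover have "A*(t-\<tau>)^2 \<le> A*h1^2" using n0 True t1 A by (intro mult_left_mono power_mono) auto
      ultimately show ?thesis using N4 N A by (simp add: abs_le_iff)
    next
      case n1: False
      define \<sigma> where "\<sigma> = t - t1"
      have s0: "\<sigma> > 0" using n1 unfolding \<sigma>_def by simp
      have P: "A*(rq(t-\<tau>) - 2*rq(t-t1)) = 2*N + B*\<sigma> - A*\<sigma>^2/2"
      proof -
        have "A*(rq(t-\<tau>) - 2*rq(t-t1)) = A*((h1+\<sigma>)^2/2 - \<sigma>^2)"
          using n1 o1 unfolding rq_def \<sigma>_def t1 by (simp add: max_def)
        also have "\<dots> = 2*N + B*\<sigma> - A*\<sigma>^2/2" unfolding B
          by (simp add: Ne power2_eq_square field_simps)
        finally show ?thesis .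
      qed
      show ?thesis
      proof (cases "t \<le> te")
        case True
        have "F t = N + (B - k*q0)*\<sigma> - A*\<sigma>^2/2 - q0^2"
          using True n1 o1 P unfolding F_def rq_def rp_def hv_def \<sigma>_def c
          by (simp add: max_def algebra_simps)
        moreover have "\<sigma> \<le> xe" using True te unfolding \<sigma>_def by simp
        ultimately show ?thesis using H1 s0 by simp
      next
        case n2: False
        show ?thesis
        proof (cases "t \<le> t2")
          case True
          have "F t = N + B*\<sigma> - A*\<sigma>^2/2 - k*q0*xe"
            using True n1 n2 o1 P unfolding F_def rq_def rp_def hv_def \<sigma>_def c te
            by (simp add: max_def algebra_simps)
          moreover have "xe \<le> \<sigma>" "\<sigma> \<le> h1 + d3" using True n2 te t2 unfolding \<sigma>_def by auto
          ultimately show ?thesis using H2 by simp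
        next
          case n3: False
          define \<rho> where "\<rho> = min (t - t2) d3"
          have r0: "0 \<le> \<rho>" "\<rho> \<le> d3" using n3 d3 unfolding \<rho>_def by auto
          have "F t = N + B*(h1 + d3) - A*(h1 + d3)^2/2 - k*q0*xe + (B - A*(h1 + d3))*\<rho> + A*\<rho>^2/2"
          proof (cases "t \<le> t3")
            case True
            have r: "\<rho> = t - t2" using True t3 unfolding \<rho>_def by simp
            have "F t = -N + A*((t-\<tau>)^2/2 - (t-t1)^2 + (t-t2)^2) - c*xe"
              using True n1 n2 n3 o1 unfolding F_def rq_def rp_def hv_def te
              by (simp add: max_def algebra_simps)
            also have "\<dots> = N + B*(h1 + d3) - A*(h1 + d3)^2/2 - k*q0*xe + (B - A*(h1 + d3))*\<rho> + A*\<rho>^2/2"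
              unfolding r t2 t1 B c by (simp add: Ne power2_eq_square field_simps)
            finally show ?thesis .
          next
            case False
            have r: "\<rho> = d3" using False t3 unfolding \<rho>_def by simp
            have "F t = -N + A*((t-\<tau>)^2/2 - (t-t1)^2 + (t-t2)^2 - (t-t3)^2/2) - c*xe"
              using False n1 n2 n3 o1 unfolding F_def rq_def rp_def hv_def te
              by (simp add: max_def algebra_simps)
            also have "\<dots> = N + B*(h1 + d3) - A*(h1 + d3)^2/2 - k*q0*xe + (B - A*(h1 + d3))*\<rho> + A*\<rho>^2/2"
              unfolding r t3 t2 t1 B c by (simp add: Ne power2_eq_square field_simps)
            finally show ?thesis .
          qed
          thus ?thesis using H3 r0 by simp
        qed
      qed
    qed
  qed
  thus ?thesis unfolding F_def .
qed



theorem proposition1: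
  fixes L N l1 l2 \<tau> :: real
  assumes "L > 0" "N > 0" "l1 > 0" "l2 > 0" "\<tau> \<ge> 0"
  shows "\<exists>f f' \<eta> (y :: real \<Rightarrow> real \<times> real).
           in_FL L f f' \<and> in_EN N \<eta> \<and> f 0 = 0 \<and> f' 0 = 0 \<and>
           filippov_solution (std_rhs l1 l2 L (\<lambda>t. f t + \<eta> t)) y \<and>
           y 0 = (f 0 + \<eta> 0, 0) \<and>
           (SUP t\<in>{\<tau>..}. ereal \<bar>snd (y t) - f' t\<bar>) \<ge> ereal (2 * sqrt (l2 + 1) * sqrt (N * L))"
proof -
  note Lp = assms(1) and Np = assms(2) and l1p = assms(3) and l2p = assms(4) and taup = assms(5)
  define A where "A = (l2+1)*L"
  define k where "k = l1 * sqrt L"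
  define B where "B = 2 * sqrt (l2 + 1) * sqrt (N * L)"
  define h1 where "h1 = B/A"
  have Ap: "A > 0" unfolding A_def using Lp l2p by simp
  have kp: "k > 0" unfolding k_def using Lp l1p by simp
  have Bp: "B > 0" unfolding B_def using Lp l2p Np by simp
  have BB: "B^2 = 4*A*N" unfolding B_def A_def using Lp l2p Np
    by (simp add: power_mult_distrib real_sqrt_mult)
  have h1p: "h1 > 0" unfolding h1_def using Ap Bp by simp
  have Bh: "B = A*h1" unfolding h1_def using Ap by simp
  have N4: "4*N = A*h1^2" using BB unfolding Bh by (simp add: power_mult_distrib power2_eq_square)
    (use Ap in \<open>simp add: field_simps\<close>)
  obtain q0 xe d3 where gp: "goodpar A B N k q0 xe d3" using par_exists[OF Ap Np kp Bp BB] by blast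
  have BA: "B/A = h1" by (simp add: h1_def)
  have gp': "q0 > 0 \<and> xe > 0 \<and> d3 \<ge> 0 \<and> xe \<le> h1 + d3" using gp unfolding goodpar_def BA by blast
  hence q0p: "q0 > 0" and xep: "xe > 0" and d3p: "d3 \<ge> 0" and xd: "xe \<le> h1 + d3" by auto
  define c where "c = k*q0"
  define t1 where "t1 = \<tau> + h1"
  define te where "te = t1 + xe"
  define t2 where "t2 = t1 + (h1 + d3)"
  define t3 where "t3 = t2 + d3"
  have o1: "\<tau> < t1" "t1 < te" "te \<le> t2" "t2 \<le> t3" using h1p xep d3p xd
    unfolding t1_def te_def t2_def t3_def by auto
  define E where "E t = A*(rp(t-\<tau>) - 2*rp(t-t1) + 2*rp(t-t2) - rp(t-t3))" for t
  define P where "P t = A*(rq(t-\<tau>) - 2*rq(t-t1) + 2*rq(t-t2) - rq(t-t3))" for t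
  define S where "S t = hv(t-\<tau>) - 2*hv(t-t1) + 2*hv(t-t2) - hv(t-t3)" for t
  define X where "X t = hv(t-t1) - hv(t-te)" for t
  define C where "C t = c*(rp(t-t1) - rp(t-te))" for t
  define f where "f t = - P t/(l2+1)" for t
  define f' where "f' t = - E t/(l2+1)" for t
  define \<eta> where "\<eta> t = -N + P t - C t - q0^2 * X t" for t
  define y where "y t = (-N + l2/(l2+1) * P t - C t, l2/(l2+1) * E t)" for t
  define v where "v t = (l2/(l2+1) * E t - c * X t, l2*L*S t)" for t

  have Sb: "-1 \<le> S t \<and> S t \<le> 1" for t
    using o1 unfolding S_def hv_def by auto
  have Xc: "X t = 0 \<or> (X t = 1 \<and> S t = -1)" for t
    using o1 unfolding S_def X_def hv_def by auto
  have dE: "(E has_real_derivative A * S t) (at t)" if "t \<notin> {\<tau>, t1, t2, t3}" for t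
  proof -
    have "((\<lambda>t. A*(rp(t-\<tau>) - 2*rp(t-t1) + 2*rp(t-t2) - rp(t-t3))) has_real_derivative
       A*(hv(t-\<tau>) - 2*hv(t-t1) + 2*hv(t-t2) - hv(t-t3))) (at t)"
      using that by (intro DERIV_cmult DERIV_diff DERIV_add deriv_rp) auto
    thus ?thesis unfolding E_def[abs_def] S_def .
  qed
  have dP: "(P has_real_derivative E t) (at t)" for t
  proof -
    have "((\<lambda>t. A*(rq(t-\<tau>) - 2*rq(t-t1) + 2*rq(t-t2) - rq(t-t3))) has_real_derivative
       A*(rp(t-\<tau>) - 2*rp(t-t1) + 2*rp(t-t2) - rp(t-t3))) (at t)"
      by (intro DERIV_cmult DERIV_diff DERIV_add deriv_rq)
    thus ?thesis unfolding P_def[abs_def] E_def .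
  qed
  have dC: "(C has_real_derivative c * X t) (at t)" if "t \<notin> {t1, te}" for t
  proof -
    have "((\<lambda>t. c*(rp(t-t1) - rp(t-te))) has_real_derivative c*(hv(t-t1) - hv(t-te))) (at t)"
      using that by (intro DERIV_cmult DERIV_diff deriv_rp) auto
    thus ?thesis unfolding C_def[abs_def] X_def .
  qed
  have AL: "A/(l2+1) = L" unfolding A_def using l2p by simp

  have FL: "in_FL L f f'"
    unfolding in_FL_def
  proof (intro conjI allI impI)
    fix t :: real assume "t \<ge> 0"
    have "((\<lambda>t. - P t/(l2+1)) has_real_derivative - E t/(l2+1)) (at t)"
      by (intro DERIV_cdivide DERIV_minus dP)
    thus "(f has_real_derivative f' t) (at t within {0..})"
      unfolding f_def[abs_def] f'_def by (rule has_field_derivative_at_within)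
  next
    show "\<exists>K. K-lipschitz_on {0..} f'"
    proof (intro exI lipschitz_onI)
      fix a b :: real
      have "\<bar>E a - E b\<bar> \<le> A*(\<bar>a-b\<bar> + 2*\<bar>a-b\<bar> + 2*\<bar>a-b\<bar> + \<bar>a-b\<bar>)"
      proof -
        have "\<bar>E a - E b\<bar> = A*\<bar>(rp(a-\<tau>) - rp(b-\<tau>)) - 2*(rp(a-t1) - rp(b-t1)) + 2*(rp(a-t2) - rp(b-t2)) - (rp(a-t3) - rp(b-t3))\<bar>"
        proof -
          have "E a - E b = A*((rp(a-\<tau>) - rp(b-\<tau>)) - 2*(rp(a-t1) - rp(b-t1)) + 2*(rp(a-t2) - rp(b-t2)) - (rp(a-t3) - rp(b-t3)))"
            unfolding E_def by (simp add: algebra_simps)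
          thus ?thesis using Ap by (simp add: abs_mult)
        qed
        also have "\<dots> \<le> A*(\<bar>a-b\<bar> + 2*\<bar>a-b\<bar> + 2*\<bar>a-b\<bar> + \<bar>a-b\<bar>)"
          using Ap rp_lip[of "a-\<tau>" "b-\<tau>"] rp_lip[of "a-t1" "b-t1"] rp_lip[of "a-t2" "b-t2"] rp_lip[of "a-t3" "b-t3"]
          by (intro mult_left_mono) (auto simp: abs_le_iff)
        finally show ?thesis .
      qed
      hence "\<bar>E a - E b\<bar> \<le> 6*A*\<bar>a-b\<bar>" by simp
      hence "\<bar>E a - E b\<bar>/(l2+1) \<le> 6*A*\<bar>a-b\<bar>/(l2+1)" using l2p by (intro divide_right_mono) auto
      also have "6*A*\<bar>a-b\<bar>/(l2+1) = 6*(A/(l2+1))*\<bar>a-b\<bar>" by simp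
      finally have "\<bar>E a - E b\<bar>/(l2+1) \<le> (6*L) * \<bar>a-b\<bar>" unfolding AL .
      moreover have "dist (f' a) (f' b) = \<bar>E a - E b\<bar>/(l2+1)"
      proof -
        have "1 + l2 \<noteq> 0" using l2p by simp
        have "f' a - f' b = (- E a - - E b)/(l2+1)" unfolding f'_def by (simp only: diff_divide_distrib)
        hence "f' a - f' b = -(E a - E b)/(l2+1)" by simp
        thus ?thesis unfolding dist_real_def using l2p by (simp add: abs_divide)
      qed
      ultimately show "dist (f' a) (f' b) \<le> 6*L * dist a b" by (simp add: dist_real_def)
      show "0 \<le> 6*L" using Lp by simp
    qed
  next
    have "negligible {\<tau>, t1, t2, t3}" by auto
    hence nul: "{\<tau>, t1, t2, t3} \<in> null_sets lebesgue" using negligible_iff_null_sets by blast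
    show "AE t in lebesgue. t \<ge> 0 \<longrightarrow>
        (\<exists>f''. (f' has_real_derivative f'') (at t within {0..}) \<and> \<bar>f''\<bar> \<le> L)"
      using AE_not_in[OF nul]
    proof (rule AE_mp, intro AE_I2 impI)
      fix t assume t: "t \<notin> {\<tau>, t1, t2, t3}"
      have "((\<lambda>t. - E t/(l2+1)) has_real_derivative - (A * S t)/(l2+1)) (at t)"
        by (intro DERIV_cdivide DERIV_minus dE t)
      hence "(f' has_real_derivative - (A * S t)/(l2+1)) (at t within {0..})"
        unfolding f'_def[abs_def] by (rule has_field_derivative_at_within)
      moreover have "\<bar>- (A * S t)/(l2+1)\<bar> \<le> L"
      proof -
        have "- (A * S t)/(l2+1) = - ((A/(l2+1)) * S t)" by simp
        hence "\<bar>- (A * S t)/(l2+1)\<bar> = L * \<bar>S t\<bar>" unfolding AL using Lp by (simp add: abs_mult)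
        also have "\<dots> \<le> L * 1" using Sb[of t] Lp by (intro mult_left_mono) auto
        finally show ?thesis by simp
      qed
      ultimately show "\<exists>f''. (f' has_real_derivative f'') (at t within {0..}) \<and> \<bar>f''\<bar> \<le> L" by blast
    qed
  qed
  have P0: "P 0 = 0" and E0: "E 0 = 0" and C0: "C 0 = 0" and X0: "X 0 = 0"
    using o1 taup unfolding P_def E_def C_def X_def rq_def rp_def hv_def by (auto simp: max_def)
  have f0: "f 0 = 0" "f' 0 = 0" unfolding f_def f'_def using P0 E0 by auto
  have EN: "in_EN N \<eta>"
    unfolding in_EN_def
  proof (intro conjI allI impI)
    have "\<eta> \<in> borel_measurable borel"
      unfolding \<eta>_def[abs_def] P_def C_def X_def by measurable
    thus "\<eta> \<in> borel_measurable (lebesgue_on {0..})" by (rule lift_meas)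
    fix t :: real
    show "\<bar>\<eta> t\<bar> \<le> N"
      unfolding \<eta>_def P_def C_def X_def
      by (rule band[OF Ap Np h1p Bh N4 gp c_def t1_def te_def t2_def t3_def])
  qed
  have y0: "y 0 = (f 0 + \<eta> 0, 0)"
    unfolding y_def \<eta>_def using P0 E0 C0 X0 f0 by simp
  have sup: "(SUP t\<in>{\<tau>..}. ereal \<bar>snd (y t) - f' t\<bar>) \<ge> ereal B"
  proof -
    have "E t1 = B" using o1 unfolding E_def rp_def t1_def Bh by (simp add: max_def)
    have ne: "l2 + 1 \<noteq> 0" "1 + l2 \<noteq> 0" using l2p by auto
    have "l2/(l2+1)*B + B/(l2+1) = (l2*B + B)/(l2+1)" by (simp add: add_divide_distrib)
    also have "l2*B + B = (l2+1)*B" by (simp add: algebra_simps)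
    also have "(l2+1)*B/(l2+1) = B" using ne by simp
    finally have "l2/(l2+1)*B + B/(l2+1) = B" .
    hence "snd (y t1) - f' t1 = B" unfolding y_def f'_def \<open>E t1 = B\<close> by simp
    hence "\<bar>snd (y t1) - f' t1\<bar> = B" using Bp by simp
    moreover have "t1 \<in> {\<tau>..}" using o1 by simp
    ultimately show ?thesis using SUP_upper[of t1 "{\<tau>..}" "\<lambda>t. ereal \<bar>snd (y t) - f' t\<bar>"] by simp
  qed
  have ne: "l2 + 1 \<noteq> 0" using l2p by simp
  have ut: "f t + \<eta> t = fst (y t) - q0^2 * X t" for t
  proof -
    have "l2/(l2+1)*P t = P t - P t/(l2+1)" using ne by (simp add: field_simps)
    thus ?thesis unfolding f_def \<eta>_def y_def by simp
  qed
  have fil: "v t \<in> filippov_set (std_rhs l1 l2 L (\<lambda>t. f t + \<eta> t) t) (y t)" for t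
  proof -
    have rhs: "std_rhs l1 l2 L (\<lambda>t. f t + \<eta> t) t = (\<lambda>z. (l1 * sqrt L * sgnpow (f t + \<eta> t - fst z) (1/2) + snd z,
        l2 * L * sgnpow (f t + \<eta> t - fst z) 0))"
      by (simp add: std_rhs_def fun_eq_iff)
    have yt: "y t = (fst (y t), snd (y t))" by simp
    from Xc[of t] show ?thesis
    proof
      assume X0: "X t = 0"
      have "(snd (y t), l2 * L * S t) \<in> filippov_set (\<lambda>z. (l1 * sqrt L * sgnpow (fst (y t) - fst z) (1/2) + snd z,
        l2 * L * sgnpow (fst (y t) - fst z) 0)) (fst (y t), snd (y t))"
        using filippov_slide[where uu="fst (y t)" and xb="snd (y t)" and a="l1 * sqrt L" and b="l2 * L" and s="S t"]
          Sb[of t] by simp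
      moreover have "v t = (snd (y t), l2 * L * S t)" unfolding v_def y_def X0 by simp
      ultimately show ?thesis unfolding rhs unfolding ut X0 by simp
    next
      assume X1: "X t = 1 \<and> S t = -1"
      have "(snd (y t) - l1 * sqrt L * sqrt (fst (y t) - (fst (y t) - q0^2)), - (l2 * L)) \<in>
        filippov_set (\<lambda>z. (l1 * sqrt L * sgnpow ((fst (y t) - q0^2) - fst z) (1/2) + snd z,
        l2 * L * sgnpow ((fst (y t) - q0^2) - fst z) 0)) (fst (y t), snd (y t))"
        by (rule filippov_minus[where uu="fst (y t) - q0^2" and xa="fst (y t)" and xb="snd (y t)" and a="l1 * sqrt L" and b="l2 * L"]) simp
      moreover have "sqrt (fst (y t) - (fst (y t) - q0^2)) = q0" using q0p by simp
      moreover have "v t = (snd (y t) - l1 * sqrt L * q0, - (l2 * L))"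
        unfolding v_def y_def c_def k_def using X1 by simp
      ultimately show ?thesis unfolding rhs unfolding ut using X1 by simp
    qed
  qed
  have dy: "(y has_vector_derivative v x) (at x)" if x: "x \<notin> {\<tau>, t1, te, t2, t3}" for x
  proof -
    have d1: "((\<lambda>t. -N + l2/(l2+1) * P t - C t) has_real_derivative l2/(l2+1) * E x - c * X x) (at x)"
    proof -
      have "((\<lambda>t. -N + l2/(l2+1) * P t - C t) has_real_derivative 0 + l2/(l2+1) * E x - c * X x) (at x)"
        using x by (intro DERIV_diff DERIV_add DERIV_const DERIV_cmult dP dC) auto
      thus ?thesis by simp
    qed
    have d2: "((\<lambda>t. l2/(l2+1) * E t) has_real_derivative l2*L*S x) (at x)"
    proof -
      have "((\<lambda>t. l2/(l2+1) * E t) has_real_derivative l2/(l2+1) * (A * S x)) (at x)"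
        using x by (intro DERIV_cmult dE) auto
      moreover have "l2/(l2+1) * (A * S x) = l2*L*S x"
      proof -
        have "l2/(l2+1) * (A * S x) = l2*(A/(l2+1))*S x" by simp
        thus ?thesis unfolding AL .
      qed
      ultimately show ?thesis by simp
    qed
    have "((\<lambda>t. (-N + l2/(l2+1) * P t - C t, l2/(l2+1) * E t)) has_vector_derivative
        (l2/(l2+1) * E x - c * X x, l2*L*S x)) (at x)"
      using d1 d2 unfolding has_real_derivative_iff_has_vector_derivative
      by (rule has_vector_derivative_Pair)
    thus ?thesis unfolding y_def[abs_def] v_def .
  qed
  have FS: "filippov_solution (std_rhs l1 l2 L (\<lambda>t. f t + \<eta> t)) y"
    unfolding filippov_solution_def
  proof (intro exI conjI allI impI)
    show "AE t in lebesgue. t \<ge> 0 \<longrightarrow> v t \<in> filippov_set (std_rhs l1 l2 L (\<lambda>t. f t + \<eta> t) t) (y t)"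
      using fil by simp
    fix T :: real assume T: "T \<ge> 0"
    have cy: "continuous_on {0..T} y"
      unfolding y_def[abs_def] P_def C_def E_def by (intro continuous_intros)
    show int: "(v has_integral (y T - y 0)) {0..T}"
      by (rule fundamental_theorem_of_calculus_interior_strong[where S="{\<tau>, t1, te, t2, t3}"])
         (use T dy cy in auto)
    define M where "M = l2/(l2+1) * (A*(6*T + \<bar>\<tau>\<bar> + 2*\<bar>t1\<bar> + 2*\<bar>t2\<bar> + \<bar>t3\<bar>)) + \<bar>c\<bar> + l2*L"
    show "v absolutely_integrable_on {0..T}"
    proof (rule absolutely_integrable_integrable_bound[where g="\<lambda>_. M"])
      show "v integrable_on {0..T}" using int by blast
      show "(\<lambda>_. M) integrable_on {0..T}" using integrable_const[of M 0 T] by (simp add: cbox_interval)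
      fix x assume x: "x \<in> {0..T}"
      have Eb: "\<bar>E x\<bar> \<le> A*(6*T + \<bar>\<tau>\<bar> + 2*\<bar>t1\<bar> + 2*\<bar>t2\<bar> + \<bar>t3\<bar>)"
      proof -
        have "\<bar>E x\<bar> = A*\<bar>rp(x-\<tau>) - 2*rp(x-t1) + 2*rp(x-t2) - rp(x-t3)\<bar>"
          unfolding E_def using Ap by (simp add: abs_mult)
        also have "\<dots> \<le> A*(6*T + \<bar>\<tau>\<bar> + 2*\<bar>t1\<bar> + 2*\<bar>t2\<bar> + \<bar>t3\<bar>)"
          using Ap x rp_bound[of x \<tau>] rp_bound[of x t1] rp_bound[of x t2] rp_bound[of x t3]
          by (intro mult_left_mono) (auto simp: abs_le_iff)
        finally show ?thesis .
      qed
      have X1: "\<bar>X x\<bar> \<le> 1" using Xc[of x] by auto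
      have "norm (v x) \<le> norm (l2/(l2+1) * E x - c * X x) + norm (l2*L*S x)"
        unfolding v_def by (rule norm_Pair_le)
      also have "\<dots> \<le> l2/(l2+1) * \<bar>E x\<bar> + \<bar>c\<bar> + l2*L"
      proof -
        have "\<bar>l2/(l2+1) * E x - c * X x\<bar> \<le> \<bar>l2/(l2+1) * E x\<bar> + \<bar>c * X x\<bar>" by (rule abs_triangle_ineq4)
        moreover have "\<bar>l2/(l2+1) * E x\<bar> = l2/(l2+1) * \<bar>E x\<bar>" using l2p by (simp add: abs_mult)
        moreover have "\<bar>c * X x\<bar> \<le> \<bar>c\<bar>" using X1 by (simp add: abs_mult mult_left_le)
        moreover have "\<bar>l2*L*S x\<bar> \<le> l2*L" using Sb[of x] l2p Lp by (simp add: abs_mult mult_left_le abs_le_iff)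
        ultimately show ?thesis by simp
      qed
      also have "\<dots> \<le> M"
      proof -
        have "l2/(l2+1) * \<bar>E x\<bar> \<le> l2/(l2+1) * (A*(6*T + \<bar>\<tau>\<bar> + 2*\<bar>t1\<bar> + 2*\<bar>t2\<bar> + \<bar>t3\<bar>))"
          using Eb l2p by (intro mult_left_mono) auto
        thus ?thesis unfolding M_def by linarith
      qed
      finally show "norm (v x) \<le> M" .
    qed
  qed
  show ?thesis
    using FL EN f0 FS y0 sup unfolding B_def by blast
qed

end
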